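(* Let $\mathbf{k}$ be a field, $p\ge3$ an integer, $S=\mathbf{k}[e_1,\dots,e_{2p}]$ standard graded, and let $I$ be the ideal generated by the $3\times3$ minors of $$\begin{pmatrix} 1 & e_1 & 0 & e_2 & 0 & \cdots & e_{p-1} & 0\\ e_p & e_{p+1} & e_1 & e_{p+2} & e_2 & \cdots & e_{2p-1} & e_{p-1}\\ e_{2p} & 0 & e_{p+1} & 0 & e_{p+2} & \cdots & 0 & e_{2p-1}\end{pmatrix}.$$ Let $I'=\langle\mathrm{in}(f):f\in I\rangle$, where $\mathrm{in}(f)$ is the lowest-degree homogeneous component of $f\neq0$. Then $$I'=\mathcal{I}_2\begin{pmatrix} e_1 & e_2 & \cdots & e_{p-1}\\ e_{p+1} & e_{p+2} & \cdots & e_{2p-1}\end{pmatrix}+\langle e_{p+1},e_{p+2},\dots,e_{2p-1}\rangle^2.$$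
   Context: $\mathcal{I}_2(\cdot)$ denotes the ideal generated by the $2\times 2$ minors of a matrix. *)

theory Defs
  imports Main "HOL-Library.Poly_Mapping"
begin

(* Multivariate polynomials over 'k in variables indexed by nat:
  a monomial is a finitely supported exponent vector nat =>0 nat,
  a polynomial is a finitely supported map from monomials to coefficients. *)

type_synonym 'k mpoly = "(nat \<Rightarrow>\<^sub>0 nat) \<Rightarrow>\<^sub>0 'k"

definition Var :: "nat \<Rightarrow> 'k::comm_ring_1 mpoly" where
  "Var i = Poly_Mapping.single (Poly_Mapping.single i 1) 1"

definition polys_in :: "nat set \<Rightarrow> 'k::comm_ring_1 mpoly set" where
  "polys_in V = {f :: 'k mpoly. \<forall>m\<in>Poly_Mapping.keys f. Poly_Mapping.keys m \<subseteq> V}"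

definition is_ideal_in :: "nat set \<Rightarrow> 'k::comm_ring_1 mpoly set \<Rightarrow> bool" where
  "is_ideal_in V J \<longleftrightarrow> J \<subseteq> polys_in V \<and> 0 \<in> J \<and>
     (\<forall>a\<in>J. \<forall>b\<in>J. a + b \<in> J) \<and> (\<forall>r\<in>polys_in V. \<forall>a\<in>J. r * a \<in> J)"

definition ideal_gen :: "nat set \<Rightarrow> 'k::comm_ring_1 mpoly set \<Rightarrow> 'k mpoly set" where
  "ideal_gen V G = \<Inter>{J. is_ideal_in V J \<and> G \<subseteq> J}"

definition ideal_sum :: "nat set \<Rightarrow> 'k::comm_ring_1 mpoly set \<Rightarrow> 'k mpoly set \<Rightarrow> 'k mpoly set" where
  "ideal_sum V I J = ideal_gen V (I \<union> J)"

definition ideal_mult :: "nat set \<Rightarrow> 'k::comm_ring_1 mpoly set \<Rightarrow> 'k mpoly set \<Rightarrow> 'k mpoly set" where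
  "ideal_mult V I J = ideal_gen V {a * b | a b. a \<in> I \<and> b \<in> J}"

definition mdeg :: "(nat \<Rightarrow>\<^sub>0 nat) \<Rightarrow> nat" where
  "mdeg m = (\<Sum>i\<in>Poly_Mapping.keys m. Poly_Mapping.lookup m i)"

definition low_deg :: "'k::comm_ring_1 mpoly \<Rightarrow> nat" where
  "low_deg f = Min (mdeg ` Poly_Mapping.keys f)"

definition init_form :: "'k::comm_ring_1 mpoly \<Rightarrow> 'k mpoly" where
  "init_form f = (\<Sum>m\<in>{m\<in>Poly_Mapping.keys f. mdeg m = low_deg f}. Poly_Mapping.single m (Poly_Mapping.lookup f m))"

definition initial_ideal :: "nat set \<Rightarrow> 'k::comm_ring_1 mpoly set \<Rightarrow> 'k mpoly set" where
  "initial_ideal V I = ideal_gen V {init_form f | f. f \<in> I \<and> f \<noteq> 0}"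

(* Minors of matrices given as functions row => column => entry (rows/cols from 0). *)
definition det3 :: "(nat \<Rightarrow> nat \<Rightarrow> 'a::comm_ring_1) \<Rightarrow> nat \<Rightarrow> nat \<Rightarrow> nat \<Rightarrow> 'a" where
  "det3 M a b c =
     M 0 a * (M 1 b * M 2 c - M 1 c * M 2 b)
   - M 0 b * (M 1 a * M 2 c - M 1 c * M 2 a)
   + M 0 c * (M 1 a * M 2 b - M 1 b * M 2 a)"

definition minors3 :: "(nat \<Rightarrow> nat \<Rightarrow> 'a::comm_ring_1) \<Rightarrow> nat \<Rightarrow> 'a set" where
  "minors3 M n = {det3 M a b c | a b c. a < b \<and> b < c \<and> c < n}"

definition minors2 :: "(nat \<Rightarrow> nat \<Rightarrow> 'a::comm_ring_1) \<Rightarrow> nat \<Rightarrow> 'a set" where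
  "minors2 M n = {M 0 a * M 1 b - M 0 b * M 1 a | a b. a < b \<and> b < n}"

(* The 3 x (2p-1) matrix of the statement (variable e_i is Var i, i = 1..2p).
  Column 0 is (1, e_p, e_2p); for j = 1..p-1 column 2j-1 is (e_j, e_{p+j}, 0)
  and column 2j is (0, e_j, e_{p+j}). *)
definition matA :: "nat \<Rightarrow> nat \<Rightarrow> nat \<Rightarrow> 'k::comm_ring_1 mpoly" where
  "matA p i j =
    (if j = 0 then (if i = 0 then 1 else if i = 1 then Var p else Var (2*p))
     else if odd j then
       (if i = 0 then Var ((j+1) div 2) else if i = 1 then Var (p + (j+1) div 2) else 0)
     else
       (if i = 0 then 0 else if i = 1 then Var (j div 2) else Var (p + j div 2)))"

definition matB :: "nat \<Rightarrow> nat \<Rightarrow> nat \<Rightarrow> 'k::comm_ring_1 mpoly" where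
  "matB p i j = (if i = 0 then Var (j+1) else Var (p + j + 1))"

end

theory Submission
  imports Defs
begin

lemma poly_expand: "(f::'a \<Rightarrow>\<^sub>0 'b::comm_monoid_add) = (\<Sum>m\<in>Poly_Mapping.keys f. Poly_Mapping.single m (Poly_Mapping.lookup f m))"
  by (rule poly_mapping_eqI) (simp add: lookup_sum lookup_single when_def in_keys_iff sum.If_cases)

lemma lookup_sum_single: "Poly_Mapping.lookup (\<Sum>m\<in>S. Poly_Mapping.single (F m) (c m)) u = (\<Sum>m\<in>S. if F m = u then c m else (0::'b::comm_monoid_add))"
  by (simp add: lookup_sum lookup_single when_def)

lemma single_sum: "(\<Sum>i\<in>S. Poly_Mapping.single k (c i)) = Poly_Mapping.single k (\<Sum>i\<in>S. (c i::'b::comm_monoid_add))"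
  by (rule poly_mapping_eqI) (simp add: lookup_sum lookup_single when_def)

lemma mdeg_superset: "finite A \<Longrightarrow> Poly_Mapping.keys m \<subseteq> A \<Longrightarrow> mdeg m = (\<Sum>i\<in>A. Poly_Mapping.lookup m i)"
  unfolding mdeg_def by (rule sum.mono_neutral_left) (auto simp: in_keys_iff)

lemma mdeg_add: "mdeg (m + n) = mdeg m + mdeg n"
proof -
  let ?A = "Poly_Mapping.keys m \<union> Poly_Mapping.keys n"
  have "mdeg (m+n) = (\<Sum>i\<in>?A. Poly_Mapping.lookup (m+n) i)"
    by (rule mdeg_superset) (use keys_add[of m n] in auto)
  also have "\<dots> = (\<Sum>i\<in>?A. Poly_Mapping.lookup m i) + (\<Sum>i\<in>?A. Poly_Mapping.lookup n i)"
    by (simp add: lookup_add sum.distrib)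
  also have "\<dots> = mdeg m + mdeg n"
    by (subst (1 2) mdeg_superset[of ?A]) auto
  finally show ?thesis .
qed

lemma mdeg_single [simp]: "mdeg (Poly_Mapping.single i k) = k"
  unfolding mdeg_def by simp

lemma mdeg_zero [simp]: "mdeg 0 = 0"
  unfolding mdeg_def by simp

lemma polys_in_iff: "f \<in> polys_in V \<longleftrightarrow> (\<forall>m\<in>Poly_Mapping.keys f. Poly_Mapping.keys m \<subseteq> V)"
  unfolding polys_in_def by simp

lemma polys_in_add: "f \<in> polys_in V \<Longrightarrow> g \<in> polys_in V \<Longrightarrow> f + g \<in> polys_in V"
  unfolding polys_in_def using keys_add[of f g] by (simp add: subset_iff) (metis UnE)

lemma polys_in_mult: "f \<in> polys_in V \<Longrightarrow> g \<in> polys_in V \<Longrightarrow> f * g \<in> polys_in V"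
proof -
  assume a: "f \<in> polys_in V" "g \<in> polys_in V"
  have "Poly_Mapping.keys m \<subseteq> V" if mk: "m \<in> Poly_Mapping.keys (f * g)" for m
  proof -
    obtain x y where "m = x + y" "x \<in> Poly_Mapping.keys f" "y \<in> Poly_Mapping.keys g"
      using keys_mult[of f g] mk by blast
    moreover have "Poly_Mapping.keys x \<subseteq> V" "Poly_Mapping.keys y \<subseteq> V"
      using a calculation unfolding polys_in_def by auto
    ultimately show ?thesis using keys_add[of x y] by blast
  qed
  then show ?thesis unfolding polys_in_def by blast
qed

lemma polys_in_uminus: "f \<in> polys_in V \<Longrightarrow> - f \<in> polys_in V"
  unfolding polys_in_def by simp

lemma polys_in_diff: "f \<in> polys_in V \<Longrightarrow> g \<in> polys_in V \<Longrightarrow> f - g \<in> polys_in V"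
  using polys_in_add[OF _ polys_in_uminus] by (metis diff_conv_add_uminus)

lemma polys_in_single: "Poly_Mapping.keys m \<subseteq> V \<Longrightarrow> Poly_Mapping.single m c \<in> polys_in V"
  unfolding polys_in_def by auto

lemma polys_in_zero [simp]: "0 \<in> polys_in V"
  unfolding polys_in_def by simp

lemma polys_in_one [simp]: "1 \<in> polys_in V"
  unfolding polys_in_def by simp

lemma polys_in_const: "Poly_Mapping.single 0 c \<in> polys_in V"
  by (rule polys_in_single) simp

lemma polys_in_Var: "i \<in> V \<Longrightarrow> Var i \<in> polys_in V"
  unfolding Var_def by (rule polys_in_single) simp

lemma polys_in_is_ideal: "is_ideal_in V (polys_in V)"
  unfolding is_ideal_in_def using polys_in_add polys_in_mult polys_in_zero by blast

lemma ideal_gen_is_ideal: 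
  assumes "G \<subseteq> polys_in V" shows "is_ideal_in V (ideal_gen V G)"
proof -
  let ?F = "{J. is_ideal_in V J \<and> G \<subseteq> J}"
  have P: "polys_in V \<in> ?F" using assms polys_in_is_ideal by blast
  have 1: "ideal_gen V G \<subseteq> polys_in V" unfolding ideal_gen_def using P by blast
  have 2: "0 \<in> ideal_gen V G" unfolding ideal_gen_def by (auto simp: is_ideal_in_def)
  have 3: "\<forall>a\<in>ideal_gen V G. \<forall>b\<in>ideal_gen V G. a + b \<in> ideal_gen V G"
    unfolding ideal_gen_def by (auto simp: is_ideal_in_def)
  have 4: "\<forall>r\<in>polys_in V. \<forall>a\<in>ideal_gen V G. r * a \<in> ideal_gen V G"
    unfolding ideal_gen_def by (auto simp: is_ideal_in_def)
  show ?thesis unfolding is_ideal_in_def[of V "ideal_gen V G"] using 1 2 3 4 by blast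
qed

lemma ideal_gen_sub: "G \<subseteq> ideal_gen V G"
  unfolding ideal_gen_def by blast

lemma ideal_gen_least: "is_ideal_in V K \<Longrightarrow> G \<subseteq> K \<Longrightarrow> ideal_gen V G \<subseteq> K"
  unfolding ideal_gen_def by blast

lemma ideal_subset: "is_ideal_in V J \<Longrightarrow> J \<subseteq> polys_in V"
  unfolding is_ideal_in_def by blast

lemma ideal_zero: "is_ideal_in V J \<Longrightarrow> 0 \<in> J"
  unfolding is_ideal_in_def by blast

lemma ideal_add: "is_ideal_in V J \<Longrightarrow> a \<in> J \<Longrightarrow> b \<in> J \<Longrightarrow> a + b \<in> J"
  unfolding is_ideal_in_def by blast

lemma ideal_mult: "is_ideal_in V J \<Longrightarrow> r \<in> polys_in V \<Longrightarrow> a \<in> J \<Longrightarrow> r * a \<in> J"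
  unfolding is_ideal_in_def by blast

lemma ideal_uminus: "is_ideal_in V J \<Longrightarrow> a \<in> J \<Longrightarrow> - a \<in> J"
  using ideal_mult[of V J "-1" a] polys_in_uminus[OF polys_in_one, of V] by simp

lemma ideal_diff: "is_ideal_in V J \<Longrightarrow> a \<in> J \<Longrightarrow> b \<in> J \<Longrightarrow> a - b \<in> J"
  by (metis diff_conv_add_uminus ideal_add ideal_uminus)

lemma ideal_sum: "is_ideal_in V J \<Longrightarrow> (\<And>i. i \<in> S \<Longrightarrow> F i \<in> J) \<Longrightarrow> sum F S \<in> J"
  by (induction S rule: infinite_finite_induct) (auto intro: ideal_zero ideal_add)

section \<open>The monomial map\<close>

definition muf :: "nat \<Rightarrow> (nat \<Rightarrow>\<^sub>0 nat) \<Rightarrow> nat \<Rightarrow> nat" where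
  "muf p m j = (if j = 0 then (\<Sum>i\<in>{p+1..2*p-1}. Poly_Mapping.lookup m i)
     else if j \<le> p - 1 then Poly_Mapping.lookup m j + Poly_Mapping.lookup m (p+j)
     else if j = p \<or> j = 2*p then Poly_Mapping.lookup m j
     else if j = 2*p+1 then mdeg m else 0)"

definition mu :: "nat \<Rightarrow> (nat \<Rightarrow>\<^sub>0 nat) \<Rightarrow> (nat \<Rightarrow>\<^sub>0 nat)" where
  "mu p m = Abs_poly_mapping (muf p m)"

lemma lookup_mu: "Poly_Mapping.lookup (mu p m) j = muf p m j"
proof -
  have z: "muf p m j = 0" if "j > 2*p+1" for j using that unfolding muf_def by auto
  have "{j. muf p m j \<noteq> 0} \<subseteq> {..2*p+1}"
  proof
    fix j assume "j \<in> {j. muf p m j \<noteq> 0}"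
    then show "j \<in> {..2*p+1}" using z[of j] by (cases "j > 2*p+1") auto
  qed
  then have "finite {j. muf p m j \<noteq> 0}" by (rule finite_subset) simp
  then show ?thesis unfolding mu_def by simp
qed

lemma mu_add: "mu p (m + n) = mu p m + mu p n"
  by (rule poly_mapping_eqI) (simp add: lookup_mu lookup_add muf_def sum.distrib mdeg_add)

lemma mu_zero [simp]: "mu p 0 = 0"
  by (rule poly_mapping_eqI) (simp add: lookup_mu muf_def)

lemma lookup_mu_T: "Poly_Mapping.lookup (mu p m) (2*p+1) = mdeg m"
  by (auto simp: lookup_mu muf_def)

definition pi :: "nat \<Rightarrow> 'k::comm_ring_1 mpoly \<Rightarrow> 'k mpoly" where
  "pi p f = (\<Sum>m\<in>Poly_Mapping.keys f. Poly_Mapping.single (mu p m) (Poly_Mapping.lookup f m))"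

lemma lookup_pi_superset:
  assumes "finite K" "Poly_Mapping.keys f \<subseteq> K"
  shows "Poly_Mapping.lookup (pi p f) u = (\<Sum>m\<in>K. if mu p m = u then Poly_Mapping.lookup f m else 0)"
proof -
  have "Poly_Mapping.lookup (pi p f) u = (\<Sum>m\<in>Poly_Mapping.keys f. if mu p m = u then Poly_Mapping.lookup f m else 0)"
    unfolding pi_def by (rule lookup_sum_single)
  also have "\<dots> = (\<Sum>m\<in>K. if mu p m = u then Poly_Mapping.lookup f m else 0)"
    by (rule sum.mono_neutral_left) (use assms in \<open>auto simp: in_keys_iff\<close>)
  finally show ?thesis .
qed

lemma lookup_pi: "Poly_Mapping.lookup (pi p f) u = (\<Sum>m\<in>Poly_Mapping.keys f. if mu p m = u then Poly_Mapping.lookup f m else 0)"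
  by (rule lookup_pi_superset) auto

lemma pi_add: "pi p (f + g) = pi p f + pi p g"
proof (rule poly_mapping_eqI)
  fix u
  let ?K = "Poly_Mapping.keys f \<union> Poly_Mapping.keys g"
  show "Poly_Mapping.lookup (pi p (f + g)) u = Poly_Mapping.lookup (pi p f + pi p g) u"
    unfolding lookup_add
    apply (subst (1 2 3) lookup_pi_superset[of ?K])
    using keys_add[of f g] by (auto simp: lookup_add sum.distrib[symmetric] intro: sum.cong)
qed

lemma pi_zero [simp]: "pi p 0 = 0"
  unfolding pi_def by simp

lemma pi_single: "pi p (Poly_Mapping.single m c) = Poly_Mapping.single (mu p m) c"
  unfolding pi_def by (cases "c = 0") auto

lemma pi_sum: "pi p (sum F S) = (\<Sum>i\<in>S. pi p (F i))"
  by (induction S rule: infinite_finite_induct) (auto simp: pi_add)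

lemma pi_uminus: "pi p (- f) = - pi p f"
proof -
  have "pi p f + pi p (-f) = 0" using pi_add[of p f "-f"] by simp
  then show ?thesis by (metis neg_eq_iff_add_eq_0)
qed

lemma pi_diff: "pi p (f - g) = pi p f - pi p g"
  by (metis diff_conv_add_uminus pi_add pi_uminus)

lemma pi_mult: "pi p (f * g) = pi p f * pi p g"
proof -
  let ?F = "Poly_Mapping.keys f" and ?G = "Poly_Mapping.keys g"
  have "f * g = (\<Sum>m\<in>?F. Poly_Mapping.single m (Poly_Mapping.lookup f m)) * (\<Sum>n\<in>?G. Poly_Mapping.single n (Poly_Mapping.lookup g n))"
    by (subst (1) poly_expand[of f], subst (1) poly_expand[of g]) (rule refl)
  also have "\<dots> = (\<Sum>m\<in>?F. \<Sum>n\<in>?G. Poly_Mapping.single (m + n) (Poly_Mapping.lookup f m * Poly_Mapping.lookup g n))"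
    by (simp add: sum_product mult_single)
  finally have fg: "f * g = \<dots>" .
  have "pi p (f * g) = (\<Sum>m\<in>?F. \<Sum>n\<in>?G. Poly_Mapping.single (mu p m + mu p n) (Poly_Mapping.lookup f m * Poly_Mapping.lookup g n))"
    unfolding fg by (simp add: pi_sum pi_single mu_add)
  also have "\<dots> = pi p f * pi p g"
    unfolding pi_def by (simp add: sum_product mult_single)
  finally show ?thesis .
qed

lemma pi_one [simp]: "pi p 1 = 1"
  using pi_single[of p 0 1] by simp

lemma mu_x: assumes "1 \<le> k" "k \<le> p - 1"
  shows "mu p (Poly_Mapping.single k 1) = Poly_Mapping.single k 1 + Poly_Mapping.single (2*p+1) 1"
  by (rule poly_mapping_eqI) (use assms in \<open>auto simp: lookup_mu muf_def lookup_add lookup_single when_def\<close>)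

lemma mu_y: assumes "1 \<le> k" "k \<le> p - 1"
  shows "mu p (Poly_Mapping.single (p+k) 1) = Poly_Mapping.single 0 1 + Poly_Mapping.single k 1 + Poly_Mapping.single (2*p+1) 1"
  by (rule poly_mapping_eqI) (use assms in \<open>auto simp: lookup_mu muf_def lookup_add lookup_single when_def\<close>)

lemma mu_a: assumes "1 \<le> p"
  shows "mu p (Poly_Mapping.single p 1) = Poly_Mapping.single p 1 + Poly_Mapping.single (2*p+1) 1"
  by (rule poly_mapping_eqI) (use assms in \<open>auto simp: lookup_mu muf_def lookup_add lookup_single when_def\<close>)

lemma mu_b: assumes "1 \<le> p"
  shows "mu p (Poly_Mapping.single (2*p) 1) = Poly_Mapping.single (2*p) 1 + Poly_Mapping.single (2*p+1) 1"
  by (rule poly_mapping_eqI) (use assms in \<open>auto simp: lookup_mu muf_def lookup_add lookup_single when_def\<close>)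

lemma Var_mult: "Var i * Var j = Poly_Mapping.single (Poly_Mapping.single i 1 + Poly_Mapping.single j 1) 1"
  unfolding Var_def by (simp add: mult_single)

lemma pi_Var_x: assumes "1 \<le> k" "k \<le> p - 1" shows "pi p (Var k) = Var k * Var (2*p+1)"
  unfolding Var_def pi_single mu_x[OF assms] mult_single by simp

lemma pi_Var_y: assumes "1 \<le> k" "k \<le> p - 1" shows "pi p (Var (p+k)) = Var 0 * Var k * Var (2*p+1)"
  unfolding Var_def pi_single mu_y[OF assms] mult_single by simp

lemma pi_Var_a: assumes "1 \<le> p" shows "pi p (Var p) = Var p * Var (2*p+1)"
  unfolding Var_def pi_single mu_a[OF assms] mult_single by simp

lemma pi_Var_b: assumes "1 \<le> p" shows "pi p (Var (2*p)) = Var (2*p) * Var (2*p+1)"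
  unfolding Var_def pi_single mu_b[OF assms] mult_single by simp

section \<open>Generators map into the principal ideal of h\<close>

definition hpol :: "nat \<Rightarrow> 'k::comm_ring_1 mpoly" where
  "hpol p = Var 0 * Var 0 - Var p * Var 0 * Var (2*p+1) + Var (2*p) * Var (2*p+1)"

definition Ecol :: "nat \<Rightarrow> nat \<Rightarrow> nat \<Rightarrow> 'k::comm_ring_1 mpoly" where
  "Ecol p x i = (if x = 0 then (if i = 0 then 1 else if i = 1 then Var p * Var (2*p+1) else Var (2*p) * Var (2*p+1))
     else if x = 1 then (if i = 0 then 1 else if i = 1 then Var 0 else 0)
     else (if i = 0 then 0 else if i = 1 then 1 else Var 0))"

definition kind :: "nat \<Rightarrow> nat" where
  "kind j = (if j = 0 then 0 else if odd j then 1 else 2)"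

definition lam :: "nat \<Rightarrow> nat \<Rightarrow> 'k::comm_ring_1 mpoly" where
  "lam p j = (if j = 0 then 1 else Var ((j+1) div 2) * Var (2*p+1))"

definition eps :: "nat \<Rightarrow> nat \<Rightarrow> nat \<Rightarrow> 'k::comm_ring_1 mpoly" where
  "eps x y z = (if (x,y,z) \<in> {(0,1,2),(1,2,0),(2,0,1)} then 1
     else if (x,y,z) \<in> {(0,2,1),(1,0,2),(2,1,0)} then -1 else 0)"

lemma pi_det3: "pi p (det3 M a b c) = det3 (\<lambda>i j. pi p (M i j)) a b c"
  unfolding det3_def by (simp add: pi_add pi_diff pi_mult)

lemma pi_matA:
  assumes "p \<ge> 1" "j < 2*p - 1"
  shows "pi p (matA p i j) = lam p j * Ecol p (kind j) i"
proof (cases "j = 0")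
  case True
  then show ?thesis using assms by (simp add: matA_def lam_def Ecol_def kind_def pi_Var_a pi_Var_b)
next
  case False
  define k where "k = (j+1) div 2"
  then have k1: "1 \<le> k" "k \<le> p - 1" using assms False by auto
  note xv = pi_Var_x[OF k1] and yv = pi_Var_y[OF k1]
  show ?thesis
  proof (cases "odd j")
    case True
    have kk: "(j+1) div 2 = k" using k_def by simp
    show ?thesis using False True
      unfolding matA_def lam_def Ecol_def kind_def kk
      by (simp add: xv yv mult_ac)
  next
    case ev: False
    then have kk: "j div 2 = k" "(j+1) div 2 = k" using k_def by presburger+
    show ?thesis using False ev
      unfolding matA_def lam_def Ecol_def kind_def kk
      by (simp add: xv yv mult_ac)
  qed
qed

lemma det3_scale: "det3 (\<lambda>i j. L j * E j i) a b c = L a * L b * L c * det3 (\<lambda>i j. E j i) a b c"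
  unfolding det3_def by (simp add: algebra_simps)

lemma detE_gen:
  "det3 (\<lambda>i j. Ecol p (K j) i) a b c = det3 (\<lambda>i j. Ecol p (if j = 0 then K a else if j = 1 then K b else K c) i) 0 1 2"
  unfolding det3_def by simp

lemma detE: assumes "x < 3" "y < 3" "z < 3"
  shows "det3 (\<lambda>i j. Ecol p (if j = 0 then x else if j = 1 then y else z) i) 0 1 2 = (hpol p :: 'k::comm_ring_1 mpoly) * eps x y z"
proof -
  have "x \<in> {0,1,2}" "y \<in> {0,1,2}" "z \<in> {0,1,2}" using assms by auto
  then show ?thesis
    unfolding det3_def Ecol_def eps_def hpol_def
    by (elim insertE emptyE; simp; algebra)
qed

lemma matA_polys:
  assumes "p \<ge> 1" "j < 2*p - 1"
  shows "matA p i j \<in> polys_in {1..2*p}"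
proof (cases "j = 0")
  case True
  then show ?thesis using assms unfolding matA_def by (auto intro!: polys_in_Var)
next
  case False
  define k where "k = (j+1) div 2"
  then have k1: "1 \<le> k" "k \<le> p - 1" using assms False by auto
  then have V: "k \<in> {1..2*p}" "p + k \<in> {1..2*p}" by auto
  show ?thesis
  proof (cases "odd j")
    case True
    have kk: "(j+1) div 2 = k" using k_def by simp
    show ?thesis using False True V
      unfolding matA_def kk by (auto intro!: polys_in_Var)
  next
    case ev: False
    then have kk: "j div 2 = k" "(j+1) div 2 = k" using k_def by presburger+
    show ?thesis using False ev V
      unfolding matA_def kk by (auto intro!: polys_in_Var)
  qed
qed

lemma det3_polys:
  assumes "\<And>i j. j \<in> {a,b,c} \<Longrightarrow> M i j \<in> polys_in V"
  shows "det3 M a b c \<in> polys_in V"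
  unfolding det3_def using assms by (intro polys_in_add polys_in_diff polys_in_mult) auto

lemma kind_lt: "kind j < 3"
  unfolding kind_def by auto

lemma det3_cong: "(\<And>i. M i a = N i a) \<Longrightarrow> (\<And>i. M i b = N i b) \<Longrightarrow> (\<And>i. M i c = N i c) \<Longrightarrow>
  det3 M a b c = det3 N a b c"
  unfolding det3_def by simp

lemma gen_in_h:
  assumes "p \<ge> 1" "a < b" "b < c" "c < 2*p - 1"
  shows "\<exists>M. pi p (det3 (matA p) a b c) = (hpol p :: 'k::comm_ring_1 mpoly) * M"
proof -
  have "pi p (det3 (matA p) a b c) = det3 (\<lambda>i j. pi p (matA p i j :: 'k mpoly)) a b c"
    by (rule pi_det3)
  also have "\<dots> = det3 (\<lambda>i j. lam p j * Ecol p (kind j) i) a b c"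
  proof (rule det3_cong)
    have ha: "a < 2*p-1" "b < 2*p-1" using assms by linarith+
    show "pi p (matA p i a) = lam p a * Ecol p (kind a) i" for i by (rule pi_matA[OF assms(1) ha(1)])
    show "pi p (matA p i b) = lam p b * Ecol p (kind b) i" for i by (rule pi_matA[OF assms(1) ha(2)])
    show "pi p (matA p i c) = lam p c * Ecol p (kind c) i" for i by (rule pi_matA[OF assms(1) assms(4)])
  qed
  also have "\<dots> = lam p a * lam p b * lam p c * det3 (\<lambda>i j. Ecol p (kind j) i) a b c"
    by (rule det3_scale)
  also have "det3 (\<lambda>i j. Ecol p (kind j) i) a b c = (hpol p :: 'k mpoly) * eps (kind a) (kind b) (kind c)"
    by (rule trans[OF detE_gen[of p kind a b c] detE[OF kind_lt kind_lt kind_lt]])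
  finally have eq: "pi p (det3 (matA p) a b c) = lam p a * lam p b * lam p c * ((hpol p :: 'k mpoly) * eps (kind a) (kind b) (kind c))" .
  have "pi p (det3 (matA p) a b c) = (hpol p :: 'k mpoly) * (lam p a * lam p b * lam p c * eps (kind a) (kind b) (kind c))"
    unfolding eq by (rule mult.left_commute)
  then show ?thesis by blast
qed

definition Sset :: "nat \<Rightarrow> 'k::comm_ring_1 mpoly set" where
  "Sset p = {f \<in> polys_in {1..2*p}. \<exists>M. pi p f = hpol p * M}"

lemma Sset_ideal: "is_ideal_in {1..2*p} (Sset p :: 'k::comm_ring_1 mpoly set)"
  unfolding is_ideal_in_def[of _ "Sset p"]
proof (intro conjI ballI)
  show "Sset p \<subseteq> polys_in {1..2 * p}" unfolding Sset_def by blast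
  show "0 \<in> Sset p" unfolding Sset_def by (auto intro: exI[of _ 0])
  fix a b :: "'k mpoly" assume "a \<in> Sset p" "b \<in> Sset p"
  then obtain M N where "a \<in> polys_in {1..2*p}" "b \<in> polys_in {1..2*p}" "pi p a = hpol p * M" "pi p b = hpol p * N"
    unfolding Sset_def by blast
  then show "a + b \<in> Sset p" unfolding Sset_def
    by (auto simp: pi_add distrib_left[symmetric] intro!: polys_in_add)
next
  fix r a :: "'k mpoly" assume "r \<in> polys_in {1..2*p}" "a \<in> Sset p"
  then obtain M where "r \<in> polys_in {1..2*p}" "a \<in> polys_in {1..2*p}" "pi p a = hpol p * M"
    unfolding Sset_def by blast
  then have "pi p (r * a) = hpol p * (pi p r * M)" "r * a \<in> polys_in {1..2*p}"
    by (simp_all add: pi_mult mult.left_commute polys_in_mult)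
  then show "r * a \<in> Sset p" unfolding Sset_def by blast
qed

lemma minors3_polys:
  assumes "p \<ge> 1"
  shows "minors3 (matA p :: nat \<Rightarrow> nat \<Rightarrow> 'k::comm_ring_1 mpoly) (2*p - 1) \<subseteq> polys_in {1..2*p}"
proof
  fix f :: "'k mpoly" assume "f \<in> minors3 (matA p) (2*p - 1)"
  then obtain a b c where f: "f = det3 (matA p) a b c" "a < b" "b < c" "c < 2*p - 1"
    unfolding minors3_def by blast
  have "det3 (matA p) a b c \<in> (polys_in {1..2*p} :: 'k mpoly set)"
  proof (rule det3_polys)
    fix i j assume "j \<in> {a,b,c}"
    then have "j < 2*p - 1" using f by auto
    then show "matA p i j \<in> polys_in {1..2*p}" using matA_polys assms by blast
  qed
  then show "f \<in> polys_in {1..2*p}" using f by simp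
qed

lemma I_sub_Sset:
  assumes "p \<ge> 1"
  shows "ideal_gen {1..2*p} (minors3 (matA p :: nat \<Rightarrow> nat \<Rightarrow> 'k::comm_ring_1 mpoly) (2*p - 1)) \<subseteq> Sset p"
proof (rule ideal_gen_least[OF Sset_ideal])
  show "minors3 (matA p) (2*p - 1) \<subseteq> (Sset p :: 'k mpoly set)"
  proof
    fix f :: "'k mpoly" assume "f \<in> minors3 (matA p) (2*p - 1)"
    then obtain a b c where f: "f = det3 (matA p) a b c" "a < b" "b < c" "c < 2*p - 1"
      unfolding minors3_def by blast
    then show "f \<in> Sset p" unfolding Sset_def
      using gen_in_h[OF assms f(2-4)] minors3_polys[OF assms] \<open>f \<in> minors3 (matA p) (2*p - 1)\<close> by blast
  qed
qed

section \<open>Lowest part of a multiple of h\<close>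

lemma lookup_single_mult:
  "Poly_Mapping.lookup (Poly_Mapping.single k c * (X::'k::comm_ring_1 mpoly)) (k + n) = c * Poly_Mapping.lookup X n"
proof -
  have "Poly_Mapping.single k c * X = Poly_Mapping.single k c * (\<Sum>n'\<in>Poly_Mapping.keys X. Poly_Mapping.single n' (Poly_Mapping.lookup X n'))"
    by (rule arg_cong[OF poly_expand])
  also have "\<dots> = (\<Sum>n'\<in>Poly_Mapping.keys X. Poly_Mapping.single (k + n') (c * Poly_Mapping.lookup X n'))"
    by (simp add: sum_distrib_left mult_single)
  finally have e: "Poly_Mapping.single k c * X = \<dots>" .
  have "Poly_Mapping.lookup (Poly_Mapping.single k c * X) (k + n) =
      (\<Sum>n'\<in>Poly_Mapping.keys X. if n' = n then c * Poly_Mapping.lookup X n' else 0)"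
    unfolding e lookup_sum_single by simp
  also have "\<dots> = c * Poly_Mapping.lookup X n"
    by (simp add: in_keys_iff)
  finally show ?thesis .
qed

lemma keys_single_mult:
  "u \<in> Poly_Mapping.keys (Poly_Mapping.single k c * (X::'k::comm_ring_1 mpoly)) \<Longrightarrow> \<exists>n\<in>Poly_Mapping.keys X. u = k + n"
  using keys_mult[of "Poly_Mapping.single k c" X] by (auto split: if_splits)

definition h1 :: "nat \<Rightarrow> 'k::comm_ring_1 mpoly" where
  "h1 p = - (Var p * Var 0 * Var (2*p+1)) + Var (2*p) * Var (2*p+1)"

lemma hpol_split: "hpol p = Poly_Mapping.single (Poly_Mapping.single 0 1 + Poly_Mapping.single 0 1) 1 + h1 p"
  unfolding hpol_def h1_def Var_mult[symmetric] by simp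

lemma keys_h1:
  assumes "p \<ge> 1" "a \<in> Poly_Mapping.keys (h1 p :: 'k::comm_ring_1 mpoly)"
  shows "Poly_Mapping.lookup a (2*p+1) = 1"
proof -
  define A where "A = Poly_Mapping.single p 1 + Poly_Mapping.single 0 1 + Poly_Mapping.single (2*p+1) (1::nat)"
  define B where "B = Poly_Mapping.single (2*p) 1 + Poly_Mapping.single (2*p+1) (1::nat)"
  have e: "h1 p = - Poly_Mapping.single A (1::'k) + Poly_Mapping.single B 1"
    unfolding h1_def Var_def A_def B_def by (simp add: mult_single)
  have "a \<in> Poly_Mapping.keys (- Poly_Mapping.single A (1::'k)) \<union> Poly_Mapping.keys (Poly_Mapping.single B (1::'k))"
    using assms(2) keys_add[of "- Poly_Mapping.single A (1::'k)" "Poly_Mapping.single B 1"] unfolding e by blast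
  then have "a = A \<or> a = B"
    by (cases "(1::'k) = 0") auto
  then show ?thesis using assms(1) unfolding A_def B_def by (auto simp: lookup_add lookup_single)
qed

lemma keys_h1_mult:
  assumes "p \<ge> 1" "u \<in> Poly_Mapping.keys (h1 p * (X::'k::comm_ring_1 mpoly))"
  shows "\<exists>n\<in>Poly_Mapping.keys X. Poly_Mapping.lookup u (2*p+1) = 1 + Poly_Mapping.lookup n (2*p+1)"
proof -
  obtain a n where "u = a + n" "a \<in> Poly_Mapping.keys (h1 p :: 'k mpoly)" "n \<in> Poly_Mapping.keys X"
    using keys_mult[of "h1 p" X] assms(2) by blast
  moreover have "Poly_Mapping.lookup a (2*p+1) = 1" using keys_h1[OF assms(1)] calculation(2) by blast
  ultimately show ?thesis by (auto simp: lookup_add)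
qed

lemma low_part:
  fixes M :: "'k::comm_ring_1 mpoly"
  assumes p: "p \<ge> 1"
    and H: "\<forall>u\<in>Poly_Mapping.keys (hpol p * M). d0 \<le> Poly_Mapping.lookup u (2*p+1)"
  shows "\<forall>u\<in>Poly_Mapping.keys (hpol p * M). Poly_Mapping.lookup u (2*p+1) = d0 \<longrightarrow> 2 \<le> Poly_Mapping.lookup u 0"
proof -
  define T where "T = 2*p+1"
  define \<delta> where "\<delta> = Poly_Mapping.single 0 1 + (Poly_Mapping.single 0 1 :: nat \<Rightarrow>\<^sub>0 nat)"
  have dT: "Poly_Mapping.lookup \<delta> T = 0" and d0l: "Poly_Mapping.lookup \<delta> 0 = 2"
    unfolding \<delta>_def T_def by (auto simp: lookup_add lookup_single)
  have hs: "hpol p * M = Poly_Mapping.single \<delta> 1 * M + h1 p * M"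
    unfolding hpol_split \<delta>_def by (simp add: distrib_right)
  have C1: "\<forall>n\<in>Poly_Mapping.keys M. d0 \<le> Poly_Mapping.lookup n T"
  proof (rule ccontr)
    assume "\<not> ?thesis"
    then obtain n1 where n1: "n1 \<in> Poly_Mapping.keys M" "Poly_Mapping.lookup n1 T < d0" by auto
    define t0 where "t0 = Min ((\<lambda>n. Poly_Mapping.lookup n T) ` Poly_Mapping.keys M)"
    have fin: "finite ((\<lambda>n. Poly_Mapping.lookup n T) ` Poly_Mapping.keys M)" by simp
    have "t0 \<in> (\<lambda>n. Poly_Mapping.lookup n T) ` Poly_Mapping.keys M"
      unfolding t0_def using n1(1) by (intro Min_in fin) auto
    then obtain n0 where n0: "n0 \<in> Poly_Mapping.keys M" "Poly_Mapping.lookup n0 T = t0" by auto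
    have tmin: "t0 \<le> Poly_Mapping.lookup n T" if "n \<in> Poly_Mapping.keys M" for n
      unfolding t0_def using that by (intro Min_le fin) auto
    have t0d: "t0 < d0" using tmin[OF n1(1)] n1(2) by simp
    have "Poly_Mapping.lookup (h1 p * M) (\<delta> + n0) = 0"
    proof (rule ccontr)
      assume "Poly_Mapping.lookup (h1 p * M) (\<delta> + n0) \<noteq> 0"
      then have "\<delta> + n0 \<in> Poly_Mapping.keys (h1 p * M)" by (simp add: in_keys_iff)
      then obtain n where "n \<in> Poly_Mapping.keys M" "Poly_Mapping.lookup (\<delta> + n0) T = 1 + Poly_Mapping.lookup n T"
        using keys_h1_mult[OF p] unfolding T_def by blast
      then show False using tmin[of n] n0 dT by (simp add: lookup_add)
    qed
    then have "Poly_Mapping.lookup (hpol p * M) (\<delta> + n0) = Poly_Mapping.lookup M n0"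
      unfolding hs lookup_add lookup_single_mult by simp
    then have "\<delta> + n0 \<in> Poly_Mapping.keys (hpol p * M)" using n0(1) by (simp add: in_keys_iff)
    then have "d0 \<le> Poly_Mapping.lookup (\<delta> + n0) T" using H unfolding T_def by blast
    then show False using n0 dT t0d by (simp add: lookup_add)
  qed
  show ?thesis
  proof (intro ballI impI)
    fix u assume u: "u \<in> Poly_Mapping.keys (hpol p * M)" "Poly_Mapping.lookup u (2*p+1) = d0"
    have "u \<notin> Poly_Mapping.keys (h1 p * M)"
    proof
      assume "u \<in> Poly_Mapping.keys (h1 p * M)"
      then obtain n where "n \<in> Poly_Mapping.keys M" "Poly_Mapping.lookup u T = 1 + Poly_Mapping.lookup n T"
        using keys_h1_mult[OF p] unfolding T_def by blast
      then show False using C1 u(2) unfolding T_def by fastforce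
    qed
    then have "u \<in> Poly_Mapping.keys (Poly_Mapping.single \<delta> 1 * M)"
      using u(1) keys_add[of "Poly_Mapping.single \<delta> 1 * M" "h1 p * M"] unfolding hs by blast
    then obtain n where "u = \<delta> + n" using keys_single_mult[of u \<delta> 1 M] by blast
    then show "2 \<le> Poly_Mapping.lookup u 0" using d0l by (simp add: lookup_add)
  qed
qed

lemma lookup_init: "Poly_Mapping.lookup (init_form f) m =
  (if m \<in> Poly_Mapping.keys f \<and> mdeg m = low_deg f then Poly_Mapping.lookup f m else 0)"
proof -
  have "Poly_Mapping.lookup (init_form f) m = (\<Sum>m'\<in>{m \<in> Poly_Mapping.keys f. mdeg m = low_deg f}. if m' = m then Poly_Mapping.lookup f m' else 0)"
    unfolding init_form_def by (rule lookup_sum_single)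
  also have "\<dots> = (if m \<in> Poly_Mapping.keys f \<and> mdeg m = low_deg f then Poly_Mapping.lookup f m else 0)"
    by (simp add: sum.delta')
  finally show ?thesis .
qed

lemma keys_init_sub: "Poly_Mapping.keys (init_form f) \<subseteq> Poly_Mapping.keys f"
  by (auto simp: in_keys_iff lookup_init split: if_splits)

lemma init_polys: "f \<in> polys_in V \<Longrightarrow> init_form f \<in> polys_in V"
  unfolding polys_in_def using keys_init_sub by blast

lemma keys_pi: "u \<in> Poly_Mapping.keys (pi p f) \<Longrightarrow> \<exists>m\<in>Poly_Mapping.keys f. mu p m = u"
proof (rule ccontr)
  assume u: "u \<in> Poly_Mapping.keys (pi p f)" and n: "\<not> (\<exists>m\<in>Poly_Mapping.keys f. mu p m = u)"
  have "\<forall>m\<in>Poly_Mapping.keys f. (if mu p m = u then Poly_Mapping.lookup f m else 0) = 0" using n by auto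
  then have "(\<Sum>m\<in>Poly_Mapping.keys f. if mu p m = u then Poly_Mapping.lookup f m else 0) = 0"
    by (rule sum.neutral)
  then show False using u by (simp add: in_keys_iff lookup_pi)
qed

lemma pi_init: "Poly_Mapping.lookup (pi p (init_form f)) u =
  (if Poly_Mapping.lookup u (2*p+1) = low_deg f then Poly_Mapping.lookup (pi p f) u else 0)"
proof -
  have "Poly_Mapping.lookup (pi p (init_form f)) u =
     (\<Sum>m\<in>Poly_Mapping.keys f. if mu p m = u then Poly_Mapping.lookup (init_form f) m else 0)"
    by (rule lookup_pi_superset) (use keys_init_sub in auto)
  also have "\<dots> = (\<Sum>m\<in>Poly_Mapping.keys f. if Poly_Mapping.lookup u (2*p+1) = low_deg f then
       (if mu p m = u then Poly_Mapping.lookup f m else 0) else 0)"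
    by (rule sum.cong) (auto simp: lookup_init lookup_mu_T[simplified])
  also have "\<dots> = (if Poly_Mapping.lookup u (2*p+1) = low_deg f then Poly_Mapping.lookup (pi p f) u else 0)"
    by (simp add: lookup_pi)
  finally show ?thesis .
qed

lemma init_d2:
  fixes f :: "'k::comm_ring_1 mpoly"
  assumes p: "p \<ge> 1" and f: "f \<in> Sset p" "f \<noteq> 0"
  shows "\<forall>u\<in>Poly_Mapping.keys (pi p (init_form f)). 2 \<le> Poly_Mapping.lookup u 0"
proof -
  obtain M where M: "pi p f = hpol p * M" using f unfolding Sset_def by blast
  have H: "\<forall>u\<in>Poly_Mapping.keys (hpol p * M). low_deg f \<le> Poly_Mapping.lookup u (2*p+1)"
  proof
    fix u assume "u \<in> Poly_Mapping.keys (hpol p * M)"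
    then obtain m where m: "m \<in> Poly_Mapping.keys f" "mu p m = u" using keys_pi M by metis
    have "low_deg f \<le> mdeg m" unfolding low_deg_def using m(1) by (intro Min_le) auto
    then show "low_deg f \<le> Poly_Mapping.lookup u (2*p+1)" using m(2) lookup_mu_T by metis
  qed
  note L = low_part[OF p H]
  show ?thesis
  proof
    fix u assume u: "u \<in> Poly_Mapping.keys (pi p (init_form f))"
    then have "Poly_Mapping.lookup (pi p (init_form f)) u \<noteq> 0" by (simp add: in_keys_iff)
    then have "Poly_Mapping.lookup u (2*p+1) = low_deg f" "Poly_Mapping.lookup (pi p f) u \<noteq> 0"
      unfolding pi_init by (auto split: if_splits)
    then show "2 \<le> Poly_Mapping.lookup u 0" using L M by (simp add: in_keys_iff)
  qed
qed

definition Jp :: "nat \<Rightarrow> 'k::comm_ring_1 mpoly set" where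
  "Jp p = ideal_sum {1..2*p} (ideal_gen {1..2*p} (minors2 (matB p :: nat \<Rightarrow> nat \<Rightarrow> 'k mpoly) (p - 1)))
             (ideal_mult {1..2*p} (ideal_gen {1..2*p} (Var ` {p+1..2*p-1})) (ideal_gen {1..2*p} (Var ` {p+1..2*p-1})))"

lemma minors2_polys: "minors2 (matB p :: nat \<Rightarrow> nat \<Rightarrow> 'k::comm_ring_1 mpoly) (p - 1) \<subseteq> polys_in {1..2*p}"
proof
  fix f :: "'k mpoly" assume "f \<in> minors2 (matB p) (p - 1)"
  then obtain a b where ab: "f = matB p 0 a * matB p 1 b - matB p 0 b * matB p 1 a" "a < b" "b < p - 1"
    unfolding minors2_def by blast
  have "a + 1 \<in> {1..2*p}" "b + 1 \<in> {1..2*p}" "p + a + 1 \<in> {1..2*p}" "p + b + 1 \<in> {1..2*p}" using ab by auto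
  then show "f \<in> polys_in {1..2*p}" unfolding ab(1) matB_def
    by (auto intro!: polys_in_diff polys_in_mult polys_in_Var)
qed

lemma Y_polys: "Var ` {p+1..2*p-1} \<subseteq> (polys_in {1..2*p} :: 'k::comm_ring_1 mpoly set)"
  by (auto intro!: polys_in_Var)

lemma Jp_parts:
  shows "is_ideal_in {1..2*p} (ideal_gen {1..2*p} (minors2 (matB p :: nat \<Rightarrow> nat \<Rightarrow> 'k::comm_ring_1 mpoly) (p - 1)))"
    and "is_ideal_in {1..2*p} (ideal_gen {1..2*p} (Var ` {p+1..2*p-1}) :: 'k mpoly set)"
    and "is_ideal_in {1..2*p} (ideal_mult {1..2*p} (ideal_gen {1..2*p} (Var ` {p+1..2*p-1})) (ideal_gen {1..2*p} (Var ` {p+1..2*p-1})) :: 'k mpoly set)"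
proof -
  show 1: "is_ideal_in {1..2*p} (ideal_gen {1..2*p} (minors2 (matB p :: nat \<Rightarrow> nat \<Rightarrow> 'k::comm_ring_1 mpoly) (p - 1)))"
    by (rule ideal_gen_is_ideal[OF minors2_polys])
  show 2: "is_ideal_in {1..2*p} (ideal_gen {1..2*p} (Var ` {p+1..2*p-1}) :: 'k mpoly set)"
    by (rule ideal_gen_is_ideal[OF Y_polys])
  have "{a * b |a b. a \<in> ideal_gen {1..2*p} (Var ` {p+1..2*p-1}) \<and> b \<in> ideal_gen {1..2*p} (Var ` {p+1..2*p-1})}
     \<subseteq> (polys_in {1..2*p} :: 'k mpoly set)"
    using ideal_subset[OF 2] by (auto intro!: polys_in_mult)
  then show "is_ideal_in {1..2*p} (ideal_mult {1..2*p} (ideal_gen {1..2*p} (Var ` {p+1..2*p-1})) (ideal_gen {1..2*p} (Var ` {p+1..2*p-1})) :: 'k mpoly set)"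
    unfolding ideal_mult_def by (rule ideal_gen_is_ideal)
qed

lemma Jp_ideal: "is_ideal_in {1..2*p} (Jp p :: 'k::comm_ring_1 mpoly set)"
  unfolding Jp_def ideal_sum_def
  by (rule ideal_gen_is_ideal) (use ideal_subset[OF Jp_parts(1)] ideal_subset[OF Jp_parts(3)] in blast)

lemma minor_in_Jp:
  assumes "a < b" "b < p - 1"
  shows "Var (a+1) * Var (p+b+1) - Var (b+1) * Var (p+a+1) \<in> (Jp p :: 'k::comm_ring_1 mpoly set)"
proof -
  have "Var (a+1) * Var (p+b+1) - Var (b+1) * Var (p+a+1) \<in> (minors2 (matB p) (p - 1) :: 'k mpoly set)"
  proof -
    have "matB p 0 a * matB p 1 b - matB p 0 b * matB p 1 a = (Var (a+1) * Var (p+b+1) - Var (b+1) * Var (p+a+1) :: 'k mpoly)"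
      unfolding matB_def by simp
    then have "\<exists>a' b'. (Var (a+1) * Var (p+b+1) - Var (b+1) * Var (p+a+1) :: 'k mpoly) =
        matB p 0 a' * matB p 1 b' - matB p 0 b' * matB p 1 a' \<and> a' < b' \<and> b' < p - 1"
      using assms by metis
    then show ?thesis unfolding minors2_def by simp
  qed
  then show ?thesis unfolding Jp_def ideal_sum_def
    using ideal_gen_sub by blast
qed

lemma yy_in_Jp:
  assumes "i \<in> {p+1..2*p-1}" "j \<in> {p+1..2*p-1}"
  shows "Var i * Var j \<in> (Jp p :: 'k::comm_ring_1 mpoly set)"
proof -
  let ?Y = "ideal_gen {1..2*p} (Var ` {p+1..2*p-1}) :: 'k mpoly set"
  have s: "Var ` {p+1..2*p-1} \<subseteq> ?Y" by (rule ideal_gen_sub)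
  have "Var i \<in> ?Y" "Var j \<in> ?Y" using subsetD[OF s, OF imageI[OF assms(1)]] subsetD[OF s, OF imageI[OF assms(2)]] by auto
  then have "Var i * Var j \<in> {a * b |a b. a \<in> ?Y \<and> b \<in> ?Y}" by blast
  then have "Var i * Var j \<in> ideal_mult {1..2*p} ?Y ?Y"
    unfolding ideal_mult_def using ideal_gen_sub[of "{a * b |a b. a \<in> ?Y \<and> b \<in> ?Y}" "{1..2*p}"] by blast
  then show ?thesis unfolding Jp_def ideal_sum_def
    using ideal_gen_sub[of "ideal_gen {1..2*p} (minors2 (matB p :: nat \<Rightarrow> nat \<Rightarrow> 'k mpoly) (p - 1)) \<union> ideal_mult {1..2*p} ?Y ?Y" "{1..2*p}"]
    by blast
qed

section \<open>Normal forms of monomials\<close>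

lemma sum_eq_1_nat:
  assumes "finite A" "(\<Sum>i\<in>A. f i) = (1::nat)"
  shows "\<exists>k\<in>A. f k = 1 \<and> (\<forall>i\<in>A. i \<noteq> k \<longrightarrow> f i = 0)"
proof -
  obtain k where k: "k \<in> A" "f k \<noteq> 0"
    using assms(2) by (metis one_neq_zero sum.neutral)
  have "(\<Sum>i\<in>A. f i) = f k + (\<Sum>i\<in>A - {k}. f i)" using assms(1) k(1) by (rule sum.remove)
  then have "f k = 1" "(\<Sum>i\<in>A - {k}. f i) = 0" using assms(2) k(2) by linarith+
  then show ?thesis using k(1) assms(1) by auto
qed

lemma sum_ge_2_nat:
  assumes "finite A" "2 \<le> (\<Sum>i\<in>A. f i::nat)"
  shows "\<exists>i\<in>A. \<exists>j\<in>A. (i = j \<longrightarrow> 2 \<le> f i) \<and> (i \<noteq> j \<longrightarrow> 1 \<le> f i \<and> 1 \<le> f j)"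
proof -
  obtain i where i: "i \<in> A" "f i \<noteq> 0"
    using assms(2) by (metis not_numeral_le_zero sum.neutral)
  show ?thesis
  proof (cases "2 \<le> f i")
    case True
    then show ?thesis using i by blast
  next
    case False
    have "(\<Sum>i\<in>A. f i) = f i + (\<Sum>i\<in>A - {i}. f i)" using assms(1) i(1) by (rule sum.remove)
    then have "(\<Sum>i\<in>A - {i}. f i) \<noteq> 0" using assms(2) False by linarith
    then obtain j where "j \<in> A - {i}" "f j \<noteq> 0" by (metis sum.neutral)
    then show ?thesis using i by (intro bexI[of _ i] bexI[of _ j]) auto
  qed
qed

lemma mu_lookup_x: "1 \<le> i \<Longrightarrow> i \<le> p - 1 \<Longrightarrow> Poly_Mapping.lookup (mu p m) i = Poly_Mapping.lookup m i + Poly_Mapping.lookup m (p+i)"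
  by (simp add: lookup_mu muf_def)

lemma mu_lookup_a: "p \<ge> 1 \<Longrightarrow> Poly_Mapping.lookup (mu p m) p = Poly_Mapping.lookup m p"
  by (auto simp: lookup_mu muf_def)

lemma mu_lookup_b: "p \<ge> 1 \<Longrightarrow> Poly_Mapping.lookup (mu p m) (2*p) = Poly_Mapping.lookup m (2*p)"
  by (auto simp: lookup_mu muf_def)

lemma mu_lookup_0: "Poly_Mapping.lookup (mu p m) 0 = (\<Sum>i\<in>{p+1..2*p-1}. Poly_Mapping.lookup m i)"
  by (simp add: lookup_mu muf_def)

definition j0 :: "nat \<Rightarrow> (nat \<Rightarrow>\<^sub>0 nat) \<Rightarrow> nat" where
  "j0 p u = (LEAST j. 1 \<le> j \<and> j \<le> p - 1 \<and> 0 < Poly_Mapping.lookup u j)"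

definition nff :: "nat \<Rightarrow> (nat \<Rightarrow>\<^sub>0 nat) \<Rightarrow> nat \<Rightarrow> nat" where
  "nff p u i = (if 1 \<le> i \<and> i \<le> p - 1 then Poly_Mapping.lookup u i - (if Poly_Mapping.lookup u 0 = 1 \<and> i = j0 p u then 1 else 0)
     else if Poly_Mapping.lookup u 0 = 1 \<and> i = p + j0 p u then 1
     else if i = p \<or> i = 2*p then Poly_Mapping.lookup u i else 0)"

definition nfm :: "nat \<Rightarrow> (nat \<Rightarrow>\<^sub>0 nat) \<Rightarrow> (nat \<Rightarrow>\<^sub>0 nat)" where
  "nfm p u = Abs_poly_mapping (nff p u)"

lemma lookup_nfm: "Poly_Mapping.lookup (nfm p u) i = nff p u i"
proof -
  have z: "nff p u i = 0" if "i > 2*p" "i \<noteq> p + j0 p u" for i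
    using that unfolding nff_def by auto
  have "{i. nff p u i \<noteq> 0} \<subseteq> {..2*p} \<union> {p + j0 p u}"
  proof
    fix i assume "i \<in> {i. nff p u i \<noteq> 0}"
    then show "i \<in> {..2*p} \<union> {p + j0 p u}" using z[of i] by (cases "i \<le> 2*p") auto
  qed
  then have "finite {i. nff p u i \<noteq> 0}" by (rule finite_subset) simp
  then show ?thesis unfolding nfm_def by simp
qed

lemma keys_V: "Poly_Mapping.keys m \<subseteq> {1..2*p} \<Longrightarrow> i \<notin> {1..2*p} \<Longrightarrow> Poly_Mapping.lookup m i = 0"
  by (auto simp: in_keys_iff)

lemma nf_M0:
  assumes p: "p \<ge> 3" and V: "Poly_Mapping.keys m \<subseteq> {1..2*p}" and y: "Poly_Mapping.lookup (mu p m) 0 = 0"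
  shows "nfm p (mu p m) = m"
proof (rule poly_mapping_eqI)
  fix i
  have y0: "Poly_Mapping.lookup m i = 0" if "i \<in> {p+1..2*p-1}" for i
    using y that unfolding mu_lookup_0 by simp
  have "nff p (mu p m) i = Poly_Mapping.lookup m i"
  proof -
    consider "1 \<le> i \<and> i \<le> p - 1" | "i = p" | "i = 2*p" | "i \<in> {p+1..2*p-1}" | "i \<notin> {1..2*p}"
      by force
    then show ?thesis
    proof cases
      case 1
      then have "p + i \<in> {p+1..2*p-1}" by auto
      then show ?thesis using 1 y y0 by (simp add: nff_def mu_lookup_x)
    next
      case 2
      then show ?thesis using p y by (simp add: nff_def mu_lookup_a)
    next
      case 3
      then show ?thesis using p y by (simp add: nff_def mu_lookup_b)
    next
      case 4
      then show ?thesis using p y y0 by (auto simp: nff_def)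
    next
      case 5
      then show ?thesis using p y keys_V[OF V 5] by (auto simp: nff_def)
    qed
  qed
  then show "Poly_Mapping.lookup (nfm p (mu p m)) i = Poly_Mapping.lookup m i" by (simp add: lookup_nfm)
qed

lemma single_w_polys:
  assumes "Poly_Mapping.keys m \<subseteq> V" "\<And>x. Poly_Mapping.lookup w x \<le> Poly_Mapping.lookup m x"
  shows "Poly_Mapping.single w 1 \<in> (polys_in V :: 'k::comm_ring_1 mpoly set)"
proof (rule polys_in_single)
  show "Poly_Mapping.keys w \<subseteq> V"
  proof
    fix x assume "x \<in> Poly_Mapping.keys w"
    then have "Poly_Mapping.lookup m x \<noteq> 0" using assms(2)[of x] by (simp add: in_keys_iff)
    then show "x \<in> V" using assms(1) by (auto simp: in_keys_iff)
  qed
qed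

lemma nf_M2:
  assumes p: "p \<ge> 3" and V: "Poly_Mapping.keys m \<subseteq> {1..2*p}" and y: "2 \<le> Poly_Mapping.lookup (mu p m) 0"
  shows "Poly_Mapping.single m 1 \<in> (Jp p :: 'k::comm_ring_1 mpoly set)"
proof -
  obtain i j where ij: "i \<in> {p+1..2*p-1}" "j \<in> {p+1..2*p-1}"
    "i = j \<longrightarrow> 2 \<le> Poly_Mapping.lookup m i" "i \<noteq> j \<longrightarrow> 1 \<le> Poly_Mapping.lookup m i \<and> 1 \<le> Poly_Mapping.lookup m j"
  proof -
    have "\<exists>i\<in>{p+1..2*p-1}. \<exists>j\<in>{p+1..2*p-1}. (i = j \<longrightarrow> 2 \<le> Poly_Mapping.lookup m i) \<and> (i \<noteq> j \<longrightarrow> 1 \<le> Poly_Mapping.lookup m i \<and> 1 \<le> Poly_Mapping.lookup m j)"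
      by (rule sum_ge_2_nat) (use y in \<open>simp_all only: mu_lookup_0 finite_atLeastAtMost\<close>)
    then show ?thesis using that by blast
  qed
  define w where "w = m - Poly_Mapping.single i 1 - Poly_Mapping.single j 1"
  have lw: "Poly_Mapping.lookup w x = Poly_Mapping.lookup m x - (if x = i then 1 else 0) - (if x = j then 1 else 0)" for x
    unfolding w_def by (simp add: lookup_minus lookup_single when_def)
  have mw: "m = w + Poly_Mapping.single i 1 + Poly_Mapping.single j 1"
  proof (rule poly_mapping_eqI)
    fix x show "Poly_Mapping.lookup m x = Poly_Mapping.lookup (w + Poly_Mapping.single i 1 + Poly_Mapping.single j 1) x"
      using ij(3,4) by (cases "x = i"; cases "x = j") (auto simp: lookup_add lw lookup_single when_def)
  qed
  have "Poly_Mapping.single m (1::'k) = Poly_Mapping.single w 1 * (Var i * Var j)"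
    by (subst mw) (simp add: Var_mult mult_single add.assoc)
  moreover have "Poly_Mapping.single w 1 \<in> (polys_in {1..2*p} :: 'k mpoly set)"
    by (rule single_w_polys[OF V]) (simp add: lw)
  moreover have "Var i * Var j \<in> (Jp p :: 'k mpoly set)" by (rule yy_in_Jp[OF ij(1,2)])
  ultimately show ?thesis using ideal_mult[OF Jp_ideal] by metis
qed

lemma nf_M1:
  assumes p: "p \<ge> 3" and V: "Poly_Mapping.keys m \<subseteq> {1..2*p}" and y: "Poly_Mapping.lookup (mu p m) 0 = 1"
  shows "Poly_Mapping.single m 1 - Poly_Mapping.single (nfm p (mu p m)) 1 \<in> (Jp p :: 'k::comm_ring_1 mpoly set)"
proof -
  obtain k' where k': "k' \<in> {p+1..2*p-1}" "Poly_Mapping.lookup m k' = 1"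
    "\<forall>i\<in>{p+1..2*p-1}. i \<noteq> k' \<longrightarrow> Poly_Mapping.lookup m i = 0"
  proof -
    have "\<exists>k\<in>{p+1..2*p-1}. Poly_Mapping.lookup m k = 1 \<and> (\<forall>i\<in>{p+1..2*p-1}. i \<noteq> k \<longrightarrow> Poly_Mapping.lookup m i = 0)"
      by (rule sum_eq_1_nat) (use y in \<open>simp_all only: mu_lookup_0 finite_atLeastAtMost\<close>)
    then show ?thesis using that by blast
  qed
  define k where "k = k' - p"
  have k: "1 \<le> k" "k \<le> p - 1" "k' = p + k" using k' unfolding k_def by auto
  have yk: "Poly_Mapping.lookup m (p+k) = 1" using k' k by simp
  have yo: "Poly_Mapping.lookup m (p+i) = 0" if "1 \<le> i" "i \<le> p - 1" "i \<noteq> k" for i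
    using k'(3) k that by auto
  define u where "u = mu p m"
  define J where "J = j0 p u"
  have uk: "0 < Poly_Mapping.lookup u k" unfolding u_def using mu_lookup_x[OF k(1,2)] yk by simp
  have PJ: "1 \<le> J \<and> J \<le> p - 1 \<and> 0 < Poly_Mapping.lookup u J"
    unfolding J_def j0_def by (rule LeastI[of _ k]) (use k uk in auto)
  have Jk: "J \<le> k"
    unfolding J_def j0_def by (rule Least_le) (use k uk in auto)
  have u0: "Poly_Mapping.lookup u 0 = 1" using y u_def by simp
  have n1: "Poly_Mapping.lookup (nfm p u) i = Poly_Mapping.lookup m i + Poly_Mapping.lookup m (p+i) - (if i = J then 1 else 0)"
    if "1 \<le> i" "i \<le> p - 1" for i
    using that u0 mu_lookup_x[OF that, of m] unfolding lookup_nfm nff_def J_def[symmetric] u_def[symmetric] by simp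
  have n2: "Poly_Mapping.lookup (nfm p u) (p + J) = 1"
    using u0 PJ unfolding lookup_nfm nff_def J_def[symmetric] by auto
  have n3: "Poly_Mapping.lookup (nfm p u) i = 0" if "i \<in> {p+1..2*p-1}" "i \<noteq> p + J" for i
    using that u0 p unfolding lookup_nfm nff_def J_def[symmetric] by auto
  have n4: "Poly_Mapping.lookup (nfm p u) i = Poly_Mapping.lookup m i" if "i = p \<or> i = 2*p" for i
    using that u0 p PJ mu_lookup_a[of p m] mu_lookup_b[of p m] unfolding lookup_nfm nff_def J_def[symmetric] u_def[symmetric]
    by auto
  have n5: "Poly_Mapping.lookup (nfm p u) i = 0" if "i \<notin> {1..2*p}" for i
    using that u0 p PJ unfolding lookup_nfm nff_def J_def[symmetric] by auto
  have mo: "Poly_Mapping.lookup m i = 0" if "i \<notin> {1..2*p}" for i using keys_V[OF V that] .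
  have cases_i: "(1 \<le> i \<and> i \<le> p - 1) \<or> i = p \<or> i = 2*p \<or> (\<exists>i'. 1 \<le> i' \<and> i' \<le> p - 1 \<and> i = p + i') \<or> i \<notin> {1..2*p}" for i
    by (cases "i \<le> p - 1"; cases "i \<le> 2*p") (auto intro: exI[of _ "i - p"])
  show ?thesis
  proof (cases "J = k")
    case True
    have "nfm p u = m"
    proof (rule poly_mapping_eqI)
      fix i
      show "Poly_Mapping.lookup (nfm p u) i = Poly_Mapping.lookup m i"
        using cases_i[of i]
      proof (elim disjE exE conjE)
        assume i: "1 \<le> i" "i \<le> p - 1"
        then show ?thesis using n1[OF i] yk yo[OF i] True by (cases "i = k") auto
      next
        fix i' assume i': "1 \<le> i'" "i' \<le> p - 1" "i = p + i'"
        then show ?thesis using n2 n3[of i] yk yo[OF i'(1,2)] True by (cases "i' = k") auto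
      qed (use n4 n5 mo in auto)
    qed
    then show ?thesis using ideal_zero[OF Jp_ideal] u_def by simp
  next
    case False
    then have Jlt: "J < k" using Jk by simp
    have mJ: "1 \<le> Poly_Mapping.lookup m J"
      using PJ yo[of J] False unfolding u_def using mu_lookup_x[of J p m] by simp
    define w where "w = m - Poly_Mapping.single J 1 - Poly_Mapping.single (p+k) 1"
    have lw: "Poly_Mapping.lookup w x = Poly_Mapping.lookup m x - (if x = J then 1 else 0) - (if x = p + k then 1 else 0)" for x
      unfolding w_def by (simp add: lookup_minus lookup_single when_def)
    have mw: "m = w + Poly_Mapping.single J 1 + Poly_Mapping.single (p+k) 1"
    proof (rule poly_mapping_eqI)
      fix x show "Poly_Mapping.lookup m x = Poly_Mapping.lookup (w + Poly_Mapping.single J 1 + Poly_Mapping.single (p+k) 1) x"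
        using mJ yk PJ by (cases "x = J"; cases "x = p + k") (auto simp: lookup_add lw lookup_single when_def)
    qed
    have nw: "nfm p u = w + Poly_Mapping.single k 1 + Poly_Mapping.single (p+J) 1"
    proof (rule poly_mapping_eqI)
      fix i
      show "Poly_Mapping.lookup (nfm p u) i = Poly_Mapping.lookup (w + Poly_Mapping.single k 1 + Poly_Mapping.single (p+J) 1) i"
        using cases_i[of i]
      proof (elim disjE exE conjE)
        assume i: "1 \<le> i" "i \<le> p - 1"
        show ?thesis
        proof (cases "i = k")
          case True
          then show ?thesis using n1[OF i] yk Jlt PJ i k by (auto simp: lookup_add lw lookup_single when_def)
        next
          case ik: False
          then show ?thesis using n1[OF i] yo[OF i ik] mJ Jlt PJ i by (auto simp: lookup_add lw lookup_single when_def)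
        qed
      next
        fix i' assume i': "1 \<le> i'" "i' \<le> p - 1" "i = p + i'"
        show ?thesis
        proof (cases "i' = J")
          case True
          then show ?thesis using n2 i' yo[of J] PJ Jlt k by (auto simp: lookup_add lw lookup_single when_def)
        next
          case iJ: False
          then have "Poly_Mapping.lookup (nfm p u) i = 0" using n3[of i] i' by auto
          moreover have "Poly_Mapping.lookup w i = 0"
            using lw[of i] yk yo[OF i'(1,2)] i' by (cases "i' = k") auto
          ultimately show ?thesis using i' iJ k by (auto simp: lookup_add lookup_single when_def)
        qed
      next
        assume "i = p"
        then show ?thesis using n4[of i] PJ k p by (auto simp: lookup_add lw lookup_single when_def)
      next
        assume "i = 2*p"
        then show ?thesis using n4[of i] PJ k p by (auto simp: lookup_add lw lookup_single when_def)
      next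
        assume "i \<notin> {1..2*p}"
        then show ?thesis using n5[of i] mo[of i] PJ k p by (auto simp: lookup_add lw lookup_single when_def)
      qed
    qed
    have eq: "Poly_Mapping.single m (1::'k) - Poly_Mapping.single (nfm p u) 1 =
        Poly_Mapping.single w 1 * (Var J * Var (p+k) - Var k * Var (p+J))"
      by (subst (1) mw, subst nw) (simp add: Var_mult mult_single right_diff_distrib add.assoc)
    have "Var ((J-1)+1) * Var (p+(k-1)+1) - Var ((k-1)+1) * Var (p+(J-1)+1) \<in> (Jp p :: 'k mpoly set)"
      by (rule minor_in_Jp) (use Jlt k PJ in auto)
    moreover have "(J-1)+1 = J" "p+(k-1)+1 = p+k" "(k-1)+1 = k" "p+(J-1)+1 = p+J" using PJ k by auto
    ultimately have mi: "Var J * Var (p+k) - Var k * Var (p+J) \<in> (Jp p :: 'k mpoly set)" by simp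
    have "Poly_Mapping.single w 1 \<in> (polys_in {1..2*p} :: 'k mpoly set)"
      by (rule single_w_polys[OF V]) (simp add: lw)
    then show ?thesis using ideal_mult[OF Jp_ideal _ mi] eq u_def by metis
  qed
qed

lemma nf_lemma:
  fixes g :: "'k::comm_ring_1 mpoly"
  assumes p: "p \<ge> 3" and g: "g \<in> polys_in {1..2*p}"
    and d2: "\<forall>u\<in>Poly_Mapping.keys (pi p g). 2 \<le> Poly_Mapping.lookup u 0"
  shows "g \<in> Jp p"
proof -
  let ?K = "Poly_Mapping.keys g"
  let ?P = "{m. 2 \<le> Poly_Mapping.lookup (mu p m) 0}"
  let ?B = "?K - ?P"
  let ?c = "Poly_Mapping.lookup g"
  have JI: "is_ideal_in {1..2*p} (Jp p :: 'k mpoly set)" by (rule Jp_ideal)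
  have KV: "Poly_Mapping.keys m \<subseteq> {1..2*p}" if "m \<in> ?K" for m
    using g that unfolding polys_in_def by blast
  have "g = (\<Sum>m\<in>?K. Poly_Mapping.single m (?c m))" by (rule poly_expand)
  also have "\<dots> = (\<Sum>m\<in>?K \<inter> ?P. Poly_Mapping.single m (?c m)) + (\<Sum>m\<in>?B. Poly_Mapping.single m (?c m))"
    by (rule sum.Int_Diff) simp
  also have "(\<Sum>m\<in>?B. Poly_Mapping.single m (?c m)) =
     (\<Sum>m\<in>?B. Poly_Mapping.single 0 (?c m) * (Poly_Mapping.single m 1 - Poly_Mapping.single (nfm p (mu p m)) 1))
     + (\<Sum>m\<in>?B. Poly_Mapping.single (nfm p (mu p m)) (?c m))"
    by (simp add: sum.distrib[symmetric] right_diff_distrib mult_single)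
  also have "(\<Sum>m\<in>?B. Poly_Mapping.single (nfm p (mu p m)) (?c m)) = 0"
  proof -
    have "(\<Sum>m\<in>?B. Poly_Mapping.single (nfm p (mu p m)) (?c m)) =
       (\<Sum>u\<in>mu p ` ?B. \<Sum>m\<in>{m \<in> ?B. mu p m = u}. Poly_Mapping.single (nfm p (mu p m)) (?c m))"
      by (rule sum.image_gen) simp
    also have "\<dots> = (\<Sum>u\<in>mu p ` ?B. 0)"
    proof (rule sum.cong[OF refl])
      fix u assume u: "u \<in> mu p ` ?B"
      then obtain m0 where m0: "m0 \<in> ?B" "mu p m0 = u" by blast
      have fib: "{m \<in> ?B. mu p m = u} = {m \<in> ?K. mu p m = u}" using m0 by auto
      have "Poly_Mapping.lookup (pi p g) u = (\<Sum>m\<in>?K. if mu p m = u then ?c m else 0)" by (rule lookup_pi)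
      also have "\<dots> = (\<Sum>m\<in>{m \<in> ?K. mu p m = u}. ?c m)" by (simp add: sum.inter_filter)
      finally have lp: "Poly_Mapping.lookup (pi p g) u = (\<Sum>m\<in>{m \<in> ?K. mu p m = u}. ?c m)" .
      have "Poly_Mapping.lookup (pi p g) u = 0"
      proof (rule ccontr)
        assume "Poly_Mapping.lookup (pi p g) u \<noteq> 0"
        then have "u \<in> Poly_Mapping.keys (pi p g)" by (simp add: in_keys_iff)
        then show False using d2 m0 by auto
      qed
      then have "(\<Sum>m\<in>{m \<in> ?B. mu p m = u}. ?c m) = 0" using lp fib by simp
      moreover have "(\<Sum>m\<in>{m \<in> ?B. mu p m = u}. Poly_Mapping.single (nfm p (mu p m)) (?c m)) =
          (\<Sum>m\<in>{m \<in> ?B. mu p m = u}. Poly_Mapping.single (nfm p u) (?c m))"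
        by (rule sum.cong) auto
      ultimately show "(\<Sum>m\<in>{m \<in> ?B. mu p m = u}. Poly_Mapping.single (nfm p (mu p m)) (?c m)) = 0"
        by (simp add: single_sum)
    qed
    finally show ?thesis by simp
  qed
  finally have geq: "g = (\<Sum>m\<in>?K \<inter> ?P. Poly_Mapping.single m (?c m)) +
     ((\<Sum>m\<in>?B. Poly_Mapping.single 0 (?c m) * (Poly_Mapping.single m 1 - Poly_Mapping.single (nfm p (mu p m)) 1)) + 0)" .
  have A: "(\<Sum>m\<in>?K \<inter> ?P. Poly_Mapping.single m (?c m)) \<in> Jp p"
  proof (rule ideal_sum[OF JI])
    fix m assume m: "m \<in> ?K \<inter> ?P"
    have "Poly_Mapping.single m (?c m) = Poly_Mapping.single 0 (?c m) * Poly_Mapping.single m 1"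
      by (simp add: mult_single)
    moreover have "Poly_Mapping.single m 1 \<in> (Jp p :: 'k mpoly set)"
      using nf_M2[OF p KV] m by blast
    ultimately show "Poly_Mapping.single m (?c m) \<in> Jp p"
      using ideal_mult[OF JI polys_in_const] by metis
  qed
  have B: "(\<Sum>m\<in>?B. Poly_Mapping.single 0 (?c m) * (Poly_Mapping.single m 1 - Poly_Mapping.single (nfm p (mu p m)) 1)) \<in> Jp p"
  proof (rule ideal_sum[OF JI])
    fix m assume m: "m \<in> ?B"
    have "Poly_Mapping.single m 1 - Poly_Mapping.single (nfm p (mu p m)) 1 \<in> (Jp p :: 'k mpoly set)"
    proof (cases "Poly_Mapping.lookup (mu p m) 0 = 0")
      case True
      then show ?thesis using nf_M0[OF p KV True] m ideal_zero[OF JI] by auto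
    next
      case False
      then have "Poly_Mapping.lookup (mu p m) 0 = 1" using m by auto
      then show ?thesis using nf_M1[OF p KV] m by blast
    qed
    then show "Poly_Mapping.single 0 (?c m) * (Poly_Mapping.single m 1 - Poly_Mapping.single (nfm p (mu p m)) 1) \<in> Jp p"
      using ideal_mult[OF JI polys_in_const] by blast
  qed
  show ?thesis using geq ideal_add[OF JI A B] by simp
qed

section \<open>The reverse inclusion\<close>

lemma init_split:
  fixes P Q :: "'k::comm_ring_1 mpoly"
  assumes P0: "P \<noteq> 0" and Pt: "\<forall>m\<in>Poly_Mapping.keys P. mdeg m = t"
    and Qt: "\<forall>m\<in>Poly_Mapping.keys Q. t < mdeg m"
  shows "init_form (P + Q) = P"
proof -
  have Qz: "Poly_Mapping.lookup Q m = 0" if "m \<in> Poly_Mapping.keys P" for m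
    using Pt Qt that by (metis in_keys_iff less_irrefl)
  have kP: "Poly_Mapping.keys P \<subseteq> Poly_Mapping.keys (P + Q)"
    using Qz by (auto simp: in_keys_iff lookup_add)
  have kPQ: "Poly_Mapping.keys (P + Q) \<subseteq> Poly_Mapping.keys P \<union> Poly_Mapping.keys Q" by (rule keys_add)
  obtain m0 where m0: "m0 \<in> Poly_Mapping.keys P" using P0 by (metis keys_eq_empty ex_in_conv)
  have ld: "low_deg (P + Q) = t"
    unfolding low_deg_def
  proof (rule Min_eqI)
    show "finite (mdeg ` Poly_Mapping.keys (P + Q))" by simp
    show "t \<le> y" if "y \<in> mdeg ` Poly_Mapping.keys (P + Q)" for y
      using that kPQ Pt Qt by fastforce
    show "t \<in> mdeg ` Poly_Mapping.keys (P + Q)" using m0 kP Pt by force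
  qed
  show ?thesis
  proof (rule poly_mapping_eqI)
    fix m
    show "Poly_Mapping.lookup (init_form (P + Q)) m = Poly_Mapping.lookup P m"
    proof (cases "m \<in> Poly_Mapping.keys P")
      case True
      then have "m \<in> Poly_Mapping.keys (P + Q)" "mdeg m = t" "Poly_Mapping.lookup Q m = 0"
        using kP Pt Qz by auto
      then show ?thesis using ld by (simp add: lookup_init lookup_add)
    next
      case False
      then have "Poly_Mapping.lookup P m = 0" by (simp add: in_keys_iff)
      moreover have "\<not> (m \<in> Poly_Mapping.keys (P + Q) \<and> mdeg m = t)"
        using False kPQ Qt by fastforce
      ultimately show ?thesis using ld by (auto simp: lookup_init)
    qed
  qed
qed

lemma init_homog:
  fixes P :: "'k::comm_ring_1 mpoly"
  assumes "P \<noteq> 0" "\<forall>m\<in>Poly_Mapping.keys P. mdeg m = t"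
  shows "init_form P = P"
  using init_split[OF assms, of 0] by simp

lemma prod_in_ideal:
  fixes Y K :: "'k::comm_ring_1 mpoly set"
  assumes K: "is_ideal_in V K" and Y: "Y \<subseteq> polys_in V"
    and YY: "\<And>y1 y2. y1 \<in> Y \<Longrightarrow> y2 \<in> Y \<Longrightarrow> y1 * y2 \<in> K"
    and a: "a \<in> ideal_gen V Y" and b: "b \<in> ideal_gen V Y"
  shows "a * b \<in> K"
proof -
  have step1: "ideal_gen V Y \<subseteq> {b \<in> polys_in V. y * b \<in> K}" if y: "y \<in> Y" for y
  proof (rule ideal_gen_least)
    show "is_ideal_in V {b \<in> polys_in V. y * b \<in> K}"
      unfolding is_ideal_in_def[of V "{b \<in> polys_in V. y * b \<in> K}"]
    proof (intro conjI ballI)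
      show "{b \<in> polys_in V. y * b \<in> K} \<subseteq> polys_in V" by blast
      show "0 \<in> {b \<in> polys_in V. y * b \<in> K}" using ideal_zero[OF K] by simp
    next
      fix a b :: "'k mpoly" assume "a \<in> {b \<in> polys_in V. y * b \<in> K}" "b \<in> {b \<in> polys_in V. y * b \<in> K}"
      then show "a + b \<in> {b \<in> polys_in V. y * b \<in> K}"
        using ideal_add[OF K] by (auto simp: distrib_left intro: polys_in_add)
    next
      fix r a :: "'k mpoly" assume "r \<in> polys_in V" "a \<in> {b \<in> polys_in V. y * b \<in> K}"
      then show "r * a \<in> {b \<in> polys_in V. y * b \<in> K}"
        using ideal_mult[OF K, of r "y * a"] by (auto simp: mult.left_commute intro: polys_in_mult)
    qed
    show "Y \<subseteq> {b \<in> polys_in V. y * b \<in> K}" using Y YY y by blast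
  qed
  have "ideal_gen V Y \<subseteq> {a \<in> polys_in V. \<forall>b\<in>ideal_gen V Y. a * b \<in> K}"
  proof (rule ideal_gen_least)
    let ?S = "{a \<in> polys_in V. \<forall>b\<in>ideal_gen V Y. a * b \<in> K}"
    show "is_ideal_in V ?S"
      unfolding is_ideal_in_def[of V ?S]
    proof (intro conjI ballI)
      show "?S \<subseteq> polys_in V" by blast
      show "0 \<in> ?S" using ideal_zero[OF K] by simp
    next
      fix a c :: "'k mpoly" assume "a \<in> ?S" "c \<in> ?S"
      then show "a + c \<in> ?S"
        using ideal_add[OF K] by (auto simp: distrib_right intro: polys_in_add)
    next
      fix r a :: "'k mpoly" assume "r \<in> polys_in V" "a \<in> ?S"
      then show "r * a \<in> ?S"
        using ideal_mult[OF K, of r] by (auto simp: mult.assoc intro: polys_in_mult)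
    qed
    show "Y \<subseteq> ?S" using step1 Y by blast
  qed
  then show ?thesis using a b by blast
qed

lemma matA_even:
  assumes "1 \<le> k" "k \<le> p - 1"
  shows "matA p 0 (2*k) = 0" "matA p 1 (2*k) = Var k" "matA p 2 (2*k) = Var (p+k)"
  using assms by (simp_all add: matA_def)

lemma matA_odd:
  assumes "1 \<le> k" "k \<le> p - 1"
  shows "matA p 0 (2*k-1) = Var k" "matA p 1 (2*k-1) = Var (p+k)" "matA p 2 (2*k-1) = 0"
proof -
  have "odd (2*k-1)" "2*k-1 \<noteq> 0" "(2*k-1+1) div 2 = k" using assms by auto
  then show "matA p 0 (2*k-1) = Var k" "matA p 1 (2*k-1) = Var (p+k)" "matA p 2 (2*k-1) = 0"
    unfolding matA_def by simp_all
qed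

lemma matA_zero: "matA p 0 0 = 1" "matA p 1 0 = Var p" "matA p 2 0 = Var (2*p)"
  by (simp_all add: matA_def)

lemma q_det:
  assumes "a < b" "b < p - 1"
  shows "det3 (matA p) 0 (2*(a+1)) (2*(b+1)) = (Var (a+1) * Var (p+b+1) - Var (b+1) * Var (p+a+1) :: 'k::comm_ring_1 mpoly)"
proof -
  have "1 \<le> a+1" "a+1 \<le> p - 1" "1 \<le> b+1" "b+1 \<le> p - 1" using assms by auto
  note e = matA_even[OF this(1,2)] matA_even[OF this(3,4)]
  show ?thesis unfolding det3_def e matA_zero by (simp add: add.assoc)
qed

lemma G_det:
  assumes "1 \<le> j" "j \<le> k" "k \<le> p - 1"
  shows "det3 (matA p) 0 (2*j-1) (2*k) = (Var (p+j) * Var (p+k) + (- (Var j * Var p * Var (p+k)) + Var j * Var k * Var (2*p)) :: 'k::comm_ring_1 mpoly)"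
proof -
  have "1 \<le> j" "j \<le> p - 1" "1 \<le> k" "k \<le> p - 1" using assms by auto
  note e = matA_odd[OF this(1,2)] matA_even[OF this(3,4)]
  show ?thesis unfolding det3_def e matA_zero by (simp add: algebra_simps)
qed

lemma single_one_ne: "Poly_Mapping.single m (1::'k::field) \<noteq> 0"
proof
  assume "Poly_Mapping.single m (1::'k) = 0"
  then have "Poly_Mapping.lookup (Poly_Mapping.single m (1::'k)) m = Poly_Mapping.lookup 0 m" by (rule arg_cong)
  then show False by simp
qed

lemma Var_mult_ne: "Var i * Var j \<noteq> (0::'k::field mpoly)"
  unfolding Var_mult by (rule single_one_ne)

lemma q_init:
  assumes "a < b" "b < p - 1"
  defines "q \<equiv> (Var (a+1) * Var (p+b+1) - Var (b+1) * Var (p+a+1) :: 'k::field mpoly)"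
  shows "q \<noteq> 0" "init_form q = q"
proof -
  define A where "A = Poly_Mapping.single (a+1) 1 + Poly_Mapping.single (p+b+1) (1::nat)"
  define B where "B = Poly_Mapping.single (b+1) 1 + Poly_Mapping.single (p+a+1) (1::nat)"
  have qe: "q = Poly_Mapping.single A 1 - Poly_Mapping.single B 1"
    unfolding q_def A_def B_def Var_mult ..
  have AB: "A \<noteq> B"
  proof
    assume "A = B"
    then have "Poly_Mapping.lookup A (a+1) = Poly_Mapping.lookup B (a+1)" by simp
    moreover have "p \<noteq> 0" using assms by auto
    ultimately show False using assms unfolding A_def B_def by (simp add: lookup_add lookup_single when_def)
  qed
  have "Poly_Mapping.lookup q A = 1" using AB unfolding qe by (simp add: lookup_minus lookup_single)
  then show q0: "q \<noteq> 0" by auto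
  have "Poly_Mapping.keys q \<subseteq> {A, B}"
    unfolding qe using keys_diff[of "Poly_Mapping.single A (1::'k)" "Poly_Mapping.single B 1"] by auto
  moreover have "mdeg A = 2" "mdeg B = 2" unfolding A_def B_def by (simp_all add: mdeg_add)
  ultimately have "\<forall>m\<in>Poly_Mapping.keys q. mdeg m = 2" by auto
  then show "init_form q = q" by (rule init_homog[OF q0])
qed

lemma G_init:
  assumes "1 \<le> j" "j \<le> k" "k \<le> p - 1"
  shows "init_form (Var (p+j) * Var (p+k) + (- (Var j * Var p * Var (p+k)) + Var j * Var k * Var (2*p)) :: 'k::field mpoly)
     = Var (p+j) * Var (p+k)"
proof (rule init_split)
  have e: "(Var (p+j) * Var (p+k) :: 'k mpoly) = Poly_Mapping.single (Poly_Mapping.single (p+j) 1 + Poly_Mapping.single (p+k) 1) 1"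
    by (rule Var_mult)
  show "(Var (p+j) * Var (p+k) :: 'k mpoly) \<noteq> 0"
    unfolding e
  proof
    assume "Poly_Mapping.single (Poly_Mapping.single (p+j) 1 + Poly_Mapping.single (p+k) 1) (1::'k) = 0"
    then show False by (metis lookup_single_eq lookup_zero one_neq_zero)
  qed
  show "\<forall>m\<in>Poly_Mapping.keys (Var (p+j) * Var (p+k) :: 'k mpoly). mdeg m = 2"
    unfolding e by (simp add: mdeg_add)
  define C where "C = Poly_Mapping.single j 1 + Poly_Mapping.single p 1 + Poly_Mapping.single (p+k) (1::nat)"
  define D where "D = Poly_Mapping.single j 1 + Poly_Mapping.single k 1 + Poly_Mapping.single (2*p) (1::nat)"
  have qe: "(- (Var j * Var p * Var (p+k)) + Var j * Var k * Var (2*p) :: 'k mpoly) = - Poly_Mapping.single C 1 + Poly_Mapping.single D 1"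
    unfolding Var_def C_def D_def by (simp add: mult_single)
  have "Poly_Mapping.keys (- Poly_Mapping.single C (1::'k) + Poly_Mapping.single D 1) \<subseteq> {C, D}"
    using keys_add[of "- Poly_Mapping.single C (1::'k)" "Poly_Mapping.single D 1"] by auto
  moreover have "mdeg C = 3" "mdeg D = 3" unfolding C_def D_def by (simp_all add: mdeg_add)
  ultimately show "\<forall>m\<in>Poly_Mapping.keys (- (Var j * Var p * Var (p+k)) + Var j * Var k * Var (2*p) :: 'k mpoly). 2 < mdeg m"
    unfolding qe by auto
qed

theorem corollary7p2:
  fixes p :: nat
  assumes "p \<ge> 3"
  defines "V \<equiv> {1..2*p}"
  defines "I \<equiv> ideal_gen V (minors3 (matA p :: nat \<Rightarrow> nat \<Rightarrow> 'k::field mpoly) (2*p - 1))"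
  shows "initial_ideal V I =
           ideal_sum V (ideal_gen V (minors2 (matB p :: nat \<Rightarrow> nat \<Rightarrow> 'k mpoly) (p - 1)))
             (ideal_mult V (ideal_gen V (Var ` {p+1..2*p-1})) (ideal_gen V (Var ` {p+1..2*p-1})))"
proof -
  have p1: "p \<ge> 1" using assms(1) by simp
  define Iset where "Iset = ideal_gen {1..2*p} (minors3 (matA p :: nat \<Rightarrow> nat \<Rightarrow> 'k::field mpoly) (2*p - 1))"
  have Iid: "is_ideal_in {1..2*p} Iset"
    unfolding Iset_def by (rule ideal_gen_is_ideal[OF minors3_polys[OF p1]])
  have ISS: "Iset \<subseteq> Sset p" unfolding Iset_def by (rule I_sub_Sset[OF p1])
  let ?G = "{init_form f | f. f \<in> Iset \<and> f \<noteq> 0}"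
  have Gp: "?G \<subseteq> polys_in {1..2*p}"
    using ideal_subset[OF Iid] init_polys by blast
  have Init_id: "is_ideal_in {1..2*p} (initial_ideal {1..2*p} Iset)"
    unfolding initial_ideal_def by (rule ideal_gen_is_ideal[OF Gp])
  have sub1: "initial_ideal {1..2*p} Iset \<subseteq> Jp p"
    unfolding initial_ideal_def
  proof (rule ideal_gen_least[OF Jp_ideal])
    show "?G \<subseteq> Jp p"
    proof
      fix g assume "g \<in> ?G"
      then obtain f where f: "g = init_form f" "f \<in> Iset" "f \<noteq> 0" by blast
      have "f \<in> Sset p" using f ISS by blast
      then have d2: "\<forall>u\<in>Poly_Mapping.keys (pi p (init_form f)). 2 \<le> Poly_Mapping.lookup u 0"
        using init_d2[OF p1 _ f(3)] by blast
      have "init_form f \<in> polys_in {1..2*p}" using f(2) ideal_subset[OF Iid] init_polys by blast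
      then show "g \<in> Jp p" using nf_lemma[OF assms(1) _ d2] f(1) by blast
    qed
  qed
  have inI: "init_form f \<in> initial_ideal {1..2*p} Iset" if "f \<in> Iset" "f \<noteq> 0" for f
    unfolding initial_ideal_def using that ideal_gen_sub[of ?G "{1..2*p}"] by blast
  have detI: "det3 (matA p) a b c \<in> Iset" if "a < b" "b < c" "c < 2*p - 1" for a b c
    unfolding Iset_def using that ideal_gen_sub[of "minors3 (matA p :: nat \<Rightarrow> nat \<Rightarrow> 'k mpoly) (2*p - 1)" "{1..2*p}"]
    unfolding minors3_def by blast
  have A: "ideal_gen {1..2*p} (minors2 (matB p :: nat \<Rightarrow> nat \<Rightarrow> 'k mpoly) (p - 1)) \<subseteq> initial_ideal {1..2*p} Iset"
  proof (rule ideal_gen_least[OF Init_id])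
    show "minors2 (matB p) (p - 1) \<subseteq> initial_ideal {1..2*p} Iset"
    proof
      fix q :: "'k mpoly" assume "q \<in> minors2 (matB p) (p - 1)"
      then obtain a b where ab: "q = matB p 0 a * matB p 1 b - matB p 0 b * matB p 1 a" "a < b" "b < p - 1"
        unfolding minors2_def by blast
      have qe: "q = Var (a+1) * Var (p+b+1) - Var (b+1) * Var (p+a+1)" using ab(1) by (simp add: matB_def)
      have "det3 (matA p) 0 (2*(a+1)) (2*(b+1)) \<in> Iset" by (rule detI) (use ab in auto)
      then have qI: "q \<in> Iset" unfolding qe q_det[OF ab(2,3), symmetric] .
      have q0: "q \<noteq> 0" and qi: "init_form q = q"
        unfolding qe by (rule q_init[OF ab(2,3)])+
      show "q \<in> initial_ideal {1..2*p} Iset"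
        using inI[OF qI q0] qi by simp
    qed
  qed
  have YY: "y1 * y2 \<in> initial_ideal {1..2*p} Iset" if yy: "y1 \<in> Var ` {p+1..2*p-1}" "y2 \<in> Var ` {p+1..2*p-1}" for y1 y2 :: "'k mpoly"
  proof -
    have main: "Var (p+j) * Var (p+k) \<in> initial_ideal {1..2*p} Iset" if jk: "1 \<le> j" "j \<le> k" "k \<le> p - 1" for j k
    proof -
      have "det3 (matA p) 0 (2*j-1) (2*k) \<in> Iset" by (rule detI) (use jk in auto)
      then have mem: "(Var (p+j) * Var (p+k) + (- (Var j * Var p * Var (p+k)) + Var j * Var k * Var (2*p)) :: 'k mpoly) \<in> Iset"
        by (simp only: G_det[OF jk])
      have ne: "(Var (p+j) * Var (p+k) + (- (Var j * Var p * Var (p+k)) + Var j * Var k * Var (2*p)) :: 'k mpoly) \<noteq> 0"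
        (is "?E \<noteq> 0")
      proof
        assume z: "?E = 0"
        have "Var (p+j) * Var (p+k) = init_form ?E" by (rule G_init[OF jk, symmetric])
        also have "\<dots> = init_form (0::'k mpoly)" using z by (rule arg_cong)
        also have "\<dots> = 0" by (simp add: init_form_def)
        finally show False using Var_mult_ne by blast
      qed
      show ?thesis using inI[OF mem ne] unfolding G_init[OF jk] .
    qed
    obtain i1 i2 where i: "y1 = Var i1" "y2 = Var i2" "i1 \<in> {p+1..2*p-1}" "i2 \<in> {p+1..2*p-1}" using yy by blast
    define j where "j = i1 - p"
    define k where "k = i2 - p"
    have jk: "1 \<le> j" "j \<le> p - 1" "1 \<le> k" "k \<le> p - 1" "i1 = p + j" "i2 = p + k"
      using i(3,4) unfolding j_def k_def by auto
    show ?thesis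
    proof (cases "j \<le> k")
      case True
      then show ?thesis using main[of j k] jk i by simp
    next
      case False
      then show ?thesis using main[of k j] jk i by (simp add: mult.commute)
    qed
  qed
  have B: "ideal_mult {1..2*p} (ideal_gen {1..2*p} (Var ` {p+1..2*p-1})) (ideal_gen {1..2*p} (Var ` {p+1..2*p-1}))
      \<subseteq> (initial_ideal {1..2*p} Iset :: 'k mpoly set)"
    unfolding ideal_mult_def
  proof (rule ideal_gen_least[OF Init_id])
    show "{a * b |a b. a \<in> ideal_gen {1..2*p} (Var ` {p+1..2*p-1}) \<and> b \<in> ideal_gen {1..2*p} (Var ` {p+1..2*p-1})}
        \<subseteq> initial_ideal {1..2*p} Iset"
      using prod_in_ideal[OF Init_id Y_polys YY] by blast
  qed
  have sub2: "Jp p \<subseteq> initial_ideal {1..2*p} Iset"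
    unfolding Jp_def ideal_sum_def
    by (rule ideal_gen_least[OF Init_id]) (use A B in blast)
  have "initial_ideal {1..2*p} Iset = Jp p" using sub1 sub2 by blast
  then show ?thesis unfolding V_def I_def Iset_def Jp_def by simp
qed

end
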